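(* Let $V$ be an $n$-dimensional complex Hilbert space with orthonormal basis $\{\lvert\psi_i\rangle\}_{i=1}^n$, and let $u$ be an $n\times n$ complex matrix with singular value decomposition $u = L D R$, where $L,R$ are unitary and $D=\mathrm{diag}(\sigma_1,\dots,\sigma_n)$ with $1\ge \sigma_1\ge\cdots\ge\sigma_n\ge 0$. Let $\epsilon_1,\dots,\epsilon_n$ be real numbers with $\tilde\sigma_j:=\sigma_j+\epsilon_j\in[0,1]$ for all $j$, and let $\tilde u$ be the matrix $\tilde u_{ij}=\sum_{k=1}^n \tilde\sigma_k L_{ik}R_{kj}$. Let $\mathbf{u}=\sum_{i,j} u_{ij}\lvert\psi_i\rangle\langle\psi_j\rvert$ and $\tilde{\mathbf{u}}=\sum_{i,j}\tilde u_{ij}\lvert\psi_i\rangle\langle\psi_j\rvert$ be the associated linear maps $V\to V$. Then, in the operator 2-norm on $\wedge V$, $$\|\wedge\mathbf{u}-\wedge\tilde{\mathbf{u}}\|\le \sum_{j=1}^n |\epsilon_j|.$$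
   Context: The exterior algebra (Fock space) $\wedge V=\bigoplus_{k\ge 0}\wedge^k V$ is the Hilbert space with orthonormal basis $\{\lvert\psi_{i_1}\rangle\wedge\cdots\wedge\lvert\psi_{i_k}\rangle : 1\le i_1<\cdots<i_k\le n,\ k\ge 0\}$. For a linear map $\mathbf{u}:V\to V$, the wedged map $\wedge\mathbf{u}:\wedge V\to\wedge V$ is the linear map defined on this basis by $\wedge\mathbf{u}(\lvert\psi_{i_1}\rangle\wedge\cdots\wedge\lvert\psi_{i_k}\rangle)=\mathbf{u}\lvert\psi_{i_1}\rangle\wedge\cdots\wedge\mathbf{u}\lvert\psi_{i_k}\rangle$ (with the empty wedge, $k=0$, mapped to itself). *)

theory Defs
  imports "HOL-Analysis.Analysis"
begin

text \<open>Finite index type 'n (with a linear order, used to list basis vectors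
  psi_i in increasing order). Vectors of V are complex^'n (coordinates w.r.t. the
  orthonormal basis psi_i); matrices are complex^'n^'n, with u$i$j = u_ij.
  The Fock space (exterior algebra) of V is complex^('n set): coordinates w.r.t.
  the orthonormal basis psi_{i_1} wedge ... wedge psi_{i_k} (i_1<...<i_k), indexed
  by the set {i_1,...,i_k}; its norm is the Hilbert (L2) norm.\<close>

definition adjoint_mat :: "complex^'n^'n \<Rightarrow> complex^'n^'n" where
  "adjoint_mat M = (\<chi> i j. cnj (M $ j $ i))"

definition unitary_mat :: "complex^'n^'n \<Rightarrow> bool" where
  "unitary_mat M \<longleftrightarrow> adjoint_mat M ** M = mat 1 \<and> M ** adjoint_mat M = mat 1"

definition diag_mat :: "('n \<Rightarrow> real) \<Rightarrow> complex^'n^'n" where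
  "diag_mat s = (\<chi> i j. if i = j then complex_of_real (s i) else 0)"

text \<open>Coordinates of the wedge product v_0 wedge ... wedge v_(k-1) of k vectors of V
  in the Fock basis: the coefficient of psi_{s_1} wedge ... wedge psi_{s_k}
  (s_1<...<s_k) is the k x k determinant det[v_j(s_i)] (Leibniz expansion).\<close>

definition wedge_vecs :: "nat \<Rightarrow> (nat \<Rightarrow> 'n::{finite,linorder} \<Rightarrow> complex) \<Rightarrow> complex^('n set)" where
  "wedge_vecs k v = (\<chi> S. if card S = k then
      (\<Sum>p\<in>{p. p permutes {..<k}}. of_int (sign p) *
          (\<Prod>i<k. v i (sorted_list_of_set S ! p i)))
    else 0)"

text \<open>The wedged map of the linear map with matrix u (u psi_t = sum_i u_it psi_i):
  the linear map on the Fock space sending the basis vector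
  psi_{t_1} wedge ... wedge psi_{t_k} to u psi_{t_1} wedge ... wedge u psi_{t_k}.\<close>

definition wedge_map :: "((complex, 'n::{finite,linorder}) vec, 'n) vec \<Rightarrow> (complex, 'n set) vec \<Rightarrow> (complex, 'n set) vec" where
  "wedge_map u x = (\<Sum>T\<in>UNIV. (x $ T) *s
      wedge_vecs (card T) (\<lambda>j i. u $ i $ (sorted_list_of_set T ! j)))"

end

theory Submission
  imports Defs
begin

definition gdet :: "complex^'n^'n \<Rightarrow> nat \<Rightarrow> (nat \<Rightarrow> 'n) \<Rightarrow> (nat \<Rightarrow> 'n) \<Rightarrow> complex" where
  "gdet A k s t = (\<Sum>p\<in>{p. p permutes {..<k}}. of_int (sign p) * (\<Prod>i<k. A $ s (p i) $ t i))"

lemma gdet_cong: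
  assumes "\<And>i. i < k \<Longrightarrow> t i = t' i"
  shows "gdet A k s t = gdet A k s t'"
  unfolding gdet_def using assms by (intro sum.cong refl arg_cong2[where f="(*)"] prod.cong) auto

lemma perm_prod_reindex:
  assumes "q permutes {..<k}"
  shows "(\<Prod>i<k. g (q i)) = (\<Prod>i<k. (g i :: complex))"
  using prod.reindex_bij_betw[OF permutes_imp_bij[OF assms], of g] by simp

lemma gdet_alt:
  assumes "a < k" "b < k" "a \<noteq> b" "t a = t b"
  shows "gdet A k s t = 0"
proof -
  let ?P = "{p. p permutes {..<k}}"
  define \<tau> where "\<tau> = Transposition.transpose a b"
  have tau: "\<tau> permutes {..<k}" unfolding \<tau>_def using assms by (intro permutes_swap_id) auto
  have tt: "t (\<tau> j) = t j" for j using assms(4) unfolding \<tau>_def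
    by (cases "j = a"; cases "j = b") (auto simp: transpose_def)
  have "gdet A k s t = (\<Sum>p\<in>?P. of_int (sign (p \<circ> \<tau>)) * (\<Prod>i<k. A $ s ((p \<circ> \<tau>) i) $ t i))"
    unfolding gdet_def by (rule sum_permutations_compose_right[OF tau])
  also have "\<dots> = (\<Sum>p\<in>?P. - (of_int (sign p) * (\<Prod>i<k. A $ s (p i) $ t i)))"
  proof (rule sum.cong[OF refl])
    fix p assume "p \<in> ?P"
    hence p: "p permutes {..<k}" by simp
    have "sign (p \<circ> \<tau>) = - sign p"
      using sign_compose[OF permutes_imp_permutation[OF _ p] permutes_imp_permutation[OF _ tau]]
      using assms(3) by (simp add: \<tau>_def sign_swap_id)
    moreover have "(\<Prod>i<k. A $ s (p (\<tau> i)) $ t i) = (\<Prod>i<k. A $ s (p i) $ t i)"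
      using perm_prod_reindex[OF tau, of "\<lambda>j. A $ s (p j) $ t (\<tau> j)"]
      by (simp add: tt)
    ultimately show "of_int (sign (p \<circ> \<tau>)) * (\<Prod>i<k. A $ s ((p \<circ> \<tau>) i) $ t i)
        = - (of_int (sign p) * (\<Prod>i<k. A $ s (p i) $ t i))" by simp
  qed
  also have "\<dots> = - gdet A k s t" unfolding gdet_def by (simp add: sum_negf)
  finally show ?thesis by simp
qed

lemma gdet_perm:
  assumes q: "q permutes {..<k}"
  shows "gdet A k s (t \<circ> q) = of_int (sign q) * gdet A k s t"
proof -
  let ?P = "{p. p permutes {..<k}}"
  have "gdet A k s (t \<circ> q) = (\<Sum>p\<in>?P. of_int (sign (p \<circ> q)) * (\<Prod>i<k. A $ s ((p \<circ> q) i) $ t (q i)))"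
    unfolding gdet_def o_def[of t] by (rule sum_permutations_compose_right[OF q])
  also have "\<dots> = (\<Sum>p\<in>?P. of_int (sign q) * (of_int (sign p) * (\<Prod>i<k. A $ s (p i) $ t i)))"
  proof (rule sum.cong[OF refl])
    fix p assume "p \<in> ?P"
    hence p: "p permutes {..<k}" by simp
    have "sign (p \<circ> q) = sign p * sign q"
      using sign_compose[OF permutes_imp_permutation[OF _ p] permutes_imp_permutation[OF _ q]] by simp
    moreover have "(\<Prod>i<k. A $ s (p (q i)) $ t (q i)) = (\<Prod>i<k. A $ s (p i) $ t i)"
      using perm_prod_reindex[OF q, of "\<lambda>j. A $ s (p j) $ t j"] by simp
    ultimately show "of_int (sign (p \<circ> q)) * (\<Prod>i<k. A $ s ((p \<circ> q) i) $ t (q i))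
        = of_int (sign q) * (of_int (sign p) * (\<Prod>i<k. A $ s (p i) $ t i))" by simp
  qed
  also have "\<dots> = of_int (sign q) * gdet A k s t" unfolding gdet_def by (simp add: sum_distrib_left)
  finally show ?thesis .
qed


lemma sl_facts:
  fixes M :: "'n::{finite,linorder} set"
  shows "distinct (sorted_list_of_set M)" "length (sorted_list_of_set M) = card M"
    "set (sorted_list_of_set M) = M"
    "bij_betw ((!) (sorted_list_of_set M)) {..<card M} M"
  by (auto intro!: bij_betw_nth)

lemma gdet_mult:
  fixes A B :: "((complex, 'n::{finite,linorder}) vec, 'n) vec"
  shows "gdet (A ** B) k s t = (\<Sum>M\<in>{M::'n set. card M = k}.
     gdet A k s ((!) (sorted_list_of_set M)) * gdet B k ((!) (sorted_list_of_set M)) t)"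
proof -
  let ?P = "{p. p permutes {..<k}}"
  let ?F = "PiE {..<k} (\<lambda>_. (UNIV::'n set))"
  let ?FI = "{f\<in>?F. inj_on f {..<k}}"
  define h where "h f = (\<Prod>i<k. B $ f i $ t i) * gdet A k s f" for f
  have "gdet (A ** B) k s t = (\<Sum>p\<in>?P. of_int (sign p) *
      (\<Sum>f\<in>?F. \<Prod>i<k. A $ s (p i) $ f i * B $ f i $ t i))"
    unfolding gdet_def matrix_matrix_mult_def
    by (intro sum.cong refl arg_cong2[where f="(*)"]) (simp add: prod_sum_PiE)
  also have "\<dots> = (\<Sum>f\<in>?F. \<Sum>p\<in>?P. of_int (sign p) *
      ((\<Prod>i<k. A $ s (p i) $ f i) * (\<Prod>i<k. B $ f i $ t i)))"
    by (simp add: sum_distrib_left prod.distrib sum.swap[of _ ?P])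
  also have "\<dots> = (\<Sum>f\<in>?F. h f)"
    unfolding h_def gdet_def by (simp add: sum_distrib_left sum_distrib_right mult_ac)
  also have "\<dots> = (\<Sum>f\<in>?FI. h f)"
  proof (rule sum.mono_neutral_right)
    show "finite ?F" by (simp add: finite_PiE)
    show "?FI \<subseteq> ?F" by blast
    show "\<forall>f\<in>?F - ?FI. h f = 0"
    proof
      fix f assume "f \<in> ?F - ?FI"
      then obtain a b where "a < k" "b < k" "a \<noteq> b" "f a = f b"
        unfolding inj_on_def by auto
      then show "h f = 0" unfolding h_def using gdet_alt[of a k b f A s] by simp
    qed
  qed
  also have "\<dots> = (\<Sum>M\<in>{M::'n set. card M = k}. \<Sum>f\<in>{f. f \<in> ?FI \<and> f ` {..<k} = M}. h f)"
  proof (rule sum.group[symmetric])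
    show "finite ?FI" by (rule finite_subset[of _ ?F]) (auto simp: finite_PiE)
    show "finite {M::'n set. card M = k}" by simp
    show "(\<lambda>f. f ` {..<k}) ` ?FI \<subseteq> {M. card M = k}"
    proof
      fix M assume "M \<in> (\<lambda>f. f ` {..<k}) ` ?FI"
      then obtain f where "inj_on f {..<k}" "M = f ` {..<k}" by blast
      then show "M \<in> {M. card M = k}" by (simp add: card_image)
    qed
  qed
  also have "\<dots> = (\<Sum>M\<in>{M::'n set. card M = k}.
     gdet A k s ((!) (sorted_list_of_set M)) * gdet B k ((!) (sorted_list_of_set M)) t)"
  proof (rule sum.cong[OF refl])
    fix M :: "'n set" assume "M \<in> {M. card M = k}"
    hence cM: "card M = k" by simp
    define m where "m = (!) (sorted_list_of_set M)"
    have bm: "bij_betw m {..<k} M" unfolding m_def using sl_facts(4)[of M] cM by simp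
    define \<Phi> where "\<Phi> q = restrict (m \<circ> q) {..<k}" for q :: "nat \<Rightarrow> nat"
    have img: "{f. f \<in> ?FI \<and> f ` {..<k} = M} = \<Phi> ` ?P"
    proof (rule set_eqI, rule iffI)
      fix f assume f: "f \<in> {f. f \<in> ?FI \<and> f ` {..<k} = M}"
      hence bf: "bij_betw f {..<k} M" by (auto simp: bij_betw_def)
      define q where "q i = (if i < k then the_inv_into {..<k} m (f i) else i)" for i
      have "bij_betw (the_inv_into {..<k} m \<circ> f) {..<k} {..<k}"
        by (rule bij_betw_trans[OF bf bij_betw_the_inv_into[OF bm]])
      hence "bij_betw q {..<k} {..<k}" by (rule bij_betw_cong[THEN iffD1, rotated]) (auto simp: q_def)
      hence q: "q permutes {..<k}" by (rule bij_imp_permutes) (auto simp: q_def)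
      have "f = \<Phi> q"
      proof
        fix i show "f i = \<Phi> q i"
        proof (cases "i < k")
          case True
          have "f i \<in> M" using bf True by (auto simp: bij_betw_def)
          then show ?thesis using True f_the_inv_into_f_bij_betw[OF bm] by (simp add: \<Phi>_def q_def)
        next
          case False
          then show ?thesis using f by (auto simp: \<Phi>_def PiE_def extensional_def)
        qed
      qed
      with q show "f \<in> \<Phi> ` ?P" by blast
    next
      fix f assume "f \<in> \<Phi> ` ?P"
      then obtain q where q: "q permutes {..<k}" and fq: "f = \<Phi> q" by blast
      have "bij_betw (m \<circ> q) {..<k} M" by (rule bij_betw_trans[OF permutes_imp_bij[OF q] bm])
      hence "bij_betw f {..<k} M" unfolding fq \<Phi>_def by (rule bij_betw_cong[THEN iffD1, rotated]) auto
      moreover have "f \<in> ?F" unfolding fq \<Phi>_def by auto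
      ultimately show "f \<in> {f. f \<in> ?FI \<and> f ` {..<k} = M}" by (auto simp: bij_betw_def)
    qed
    have inj: "inj_on \<Phi> ?P"
    proof (rule inj_onI)
      fix q1 q2 assume q1: "q1 \<in> ?P" and q2: "q2 \<in> ?P" and e: "\<Phi> q1 = \<Phi> q2"
      show "q1 = q2"
      proof
        fix i show "q1 i = q2 i"
        proof (cases "i < k")
          case True
          have "m (q1 i) = m (q2 i)" using fun_cong[OF e, of i] True by (simp add: \<Phi>_def)
          moreover have "q1 i < k" "q2 i < k" using q1 q2 True permutes_in_image by fastforce+
          ultimately show ?thesis using bm unfolding bij_betw_def inj_on_def by blast
        next
          case False
          then show ?thesis using q1 q2 permutes_not_in[of q1 "{..<k}" i] permutes_not_in[of q2 "{..<k}" i] by simp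
        qed
      qed
    qed
    have "(\<Sum>f\<in>{f. f \<in> ?FI \<and> f ` {..<k} = M}. h f) = (\<Sum>q\<in>?P. h (\<Phi> q))"
      unfolding img by (simp add: sum.reindex[OF inj])
    also have "\<dots> = (\<Sum>q\<in>?P. gdet A k s m * (of_int (sign q) * (\<Prod>i<k. B $ m (q i) $ t i)))"
    proof (rule sum.cong[OF refl])
      fix q assume "q \<in> ?P"
      hence q: "q permutes {..<k}" by simp
      have "h (\<Phi> q) = (\<Prod>i<k. B $ m (q i) $ t i) * gdet A k s (m \<circ> q)"
        unfolding h_def \<Phi>_def by (intro arg_cong2[where f="(*)"] prod.cong gdet_cong) auto
      also have "\<dots> = (\<Prod>i<k. B $ m (q i) $ t i) * (of_int (sign q) * gdet A k s m)"
        by (simp add: gdet_perm[OF q])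
      finally show "h (\<Phi> q) = gdet A k s m * (of_int (sign q) * (\<Prod>i<k. B $ m (q i) $ t i))"
        by (simp add: mult_ac)
    qed
    also have "\<dots> = gdet A k s m * gdet B k m t"
      unfolding gdet_def by (simp add: sum_distrib_left)
    finally show "(\<Sum>f\<in>{f. f \<in> ?FI \<and> f ` {..<k} = M}. h f) =
       gdet A k s ((!) (sorted_list_of_set M)) * gdet B k ((!) (sorted_list_of_set M)) t"
      by (simp add: m_def)
  qed
  finally show ?thesis .
qed


definition cmp :: "((complex, 'n::{finite,linorder}) vec, 'n) vec \<Rightarrow> 'n set \<Rightarrow> 'n set \<Rightarrow> complex" where
  "cmp A S T = (if card S = card T then
     gdet A (card T) ((!) (sorted_list_of_set S)) ((!) (sorted_list_of_set T)) else 0)"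

lemma wedge_map_nth: "wedge_map A x $ S = (\<Sum>T\<in>UNIV. cmp A S T * x $ T)"
  unfolding wedge_map_def wedge_vecs_def cmp_def gdet_def
  by (auto simp: sum_component intro!: sum.cong)

lemma cmp_mult:
  fixes A B :: "((complex, 'n::{finite,linorder}) vec, 'n) vec"
  shows "cmp (A ** B) S T = (\<Sum>M\<in>UNIV. cmp A S M * cmp B M T)"
proof (cases "card S = card T")
  case True
  let ?k = "card T"
  have "cmp (A ** B) S T = (\<Sum>M\<in>{M::'n set. card M = ?k}. cmp A S M * cmp B M T)"
    unfolding cmp_def using True by (simp add: gdet_mult)
  also have "\<dots> = (\<Sum>M\<in>UNIV. cmp A S M * cmp B M T)"
    by (rule sum.mono_neutral_left) (auto simp: cmp_def True)
  finally show ?thesis .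
next
  case False
  then show ?thesis unfolding cmp_def by (auto intro!: sum.neutral)
qed

lemma wedge_map_mult:
  fixes A B :: "((complex, 'n::{finite,linorder}) vec, 'n) vec"
  shows "wedge_map (A ** B) x = wedge_map A (wedge_map B x)"
proof (rule vec_eq_iff[THEN iffD2], rule allI)
  fix S
  have "wedge_map A (wedge_map B x) $ S = (\<Sum>M\<in>UNIV. \<Sum>T\<in>UNIV. cmp A S M * cmp B M T * x $ T)"
    by (simp add: wedge_map_nth sum_distrib_left mult_ac)
  also have "\<dots> = (\<Sum>T\<in>UNIV. (\<Sum>M\<in>UNIV. cmp A S M * cmp B M T) * x $ T)"
    by (subst sum.swap) (simp add: sum_distrib_right)
  finally show "wedge_map (A ** B) x $ S = wedge_map A (wedge_map B x) $ S"
    by (simp add: wedge_map_nth cmp_mult)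
qed

lemma wedge_map_diff: "wedge_map A (x - y) = wedge_map A x - wedge_map A y"
  by (rule vec_eq_iff[THEN iffD2], rule allI) (simp add: wedge_map_nth sum_subtractf right_diff_distrib)


lemma cmp_diag:
  fixes d :: "'n::{finite,linorder} \<Rightarrow> real"
  shows "cmp (diag_mat d) S T = (if S = T then complex_of_real (\<Prod>x\<in>S. d x) else 0)"
proof (cases "card S = card T")
  case False
  then show ?thesis unfolding cmp_def by auto
next
  case True
  define k where "k = card T"
  define s where "s = (!) (sorted_list_of_set S)"
  define t where "t = (!) (sorted_list_of_set T)"
  have bs: "bij_betw s {..<k} S" unfolding s_def k_def using sl_facts(4)[of S] True by simp
  have bt: "bij_betw t {..<k} T" unfolding t_def k_def using sl_facts(4)[of T] by simp
  let ?P = "{p. p permutes {..<k}}"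
  let ?c = "complex_of_real (\<Prod>x\<in>S. d x)"
  have dm: "diag_mat d $ a $ b = (if a = b then complex_of_real (d a) else 0)" for a b
    by (simp add: diag_mat_def)
  have hterm: "of_int (sign p) * (\<Prod>i<k. diag_mat d $ s (p i) $ t i)
      = (if S = T then (if p = id then ?c else 0) else 0)" if p: "p permutes {..<k}" for p
  proof (cases "\<forall>i<k. s (p i) = t i")
    case True
    have "S = s ` (p ` {..<k})" using bs permutes_image[OF p] by (simp add: bij_betw_def)
    also have "\<dots> = t ` {..<k}" using True by (auto simp: image_iff)
    also have "\<dots> = T" using bt by (simp add: bij_betw_def)
    finally have ST: "S = T" .
    have "p i = i" for i
    proof (cases "i < k")
      case True
      have "s (p i) = s i" using \<open>\<forall>i<k. s (p i) = t i\<close> True by (simp add: s_def t_def ST)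
      moreover have "p i < k" using p True permutes_in_image by fastforce
      ultimately show ?thesis using bs True unfolding bij_betw_def inj_on_def by blast
    next
      case False
      then show ?thesis using permutes_not_in[OF p, of i] by simp
    qed
    hence pid: "p = id" by auto
    have "(\<Prod>i<k. diag_mat d $ s (p i) $ t i) = (\<Prod>i<k. complex_of_real (d (s i)))"
      using True by (intro prod.cong) (auto simp: dm pid)
    also have "\<dots> = complex_of_real (\<Prod>i<k. d (s i))" by simp
    also have "(\<Prod>i<k. d (s i)) = (\<Prod>x\<in>S. d x)" by (rule prod.reindex_bij_betw[OF bs])
    finally show ?thesis using ST pid by simp
  next
    case False
    then obtain i where i: "i < k" "s (p i) \<noteq> t i" by blast
    have "(\<Prod>i<k. diag_mat d $ s (p i) $ t i) = 0"
      using i by (intro prod_zero) (auto simp: dm)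
    moreover have "\<not> (S = T \<and> p = id)" using i by (auto simp: s_def t_def)
    ultimately show ?thesis by auto
  qed
  have "cmp (diag_mat d) S T = (\<Sum>p\<in>?P. of_int (sign p) * (\<Prod>i<k. diag_mat d $ s (p i) $ t i))"
    unfolding cmp_def gdet_def using True by (simp add: k_def s_def t_def)
  also have "\<dots> = (\<Sum>p\<in>?P. if S = T then (if p = id then ?c else 0) else 0)"
    by (rule sum.cong) (auto simp: hterm)
  also have "\<dots> = (if S = T then ?c else 0)"
    by (auto simp: sum.delta finite_permutations permutes_id)
  finally show ?thesis .
qed

lemma perm_transpose:
  fixes X :: "nat \<Rightarrow> nat \<Rightarrow> complex"
  shows "(\<Sum>p\<in>{p. p permutes {..<k}}. of_int (sign p) * (\<Prod>i<k. X i (p i)))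
       = (\<Sum>p\<in>{p. p permutes {..<k}}. of_int (sign p) * (\<Prod>i<k. X (p i) i))"
proof -
  let ?P = "{p. p permutes {..<k}}"
  have "(\<Sum>p\<in>?P. of_int (sign p) * (\<Prod>i<k. X (p i) i))
      = (\<Sum>p\<in>?P. of_int (sign (inv p)) * (\<Prod>i<k. X (inv p i) i))"
    by (rule sum_permutations_inverse)
  also have "\<dots> = (\<Sum>p\<in>?P. of_int (sign p) * (\<Prod>i<k. X i (p i)))"
  proof (rule sum.cong[OF refl])
    fix p assume "p \<in> ?P"
    hence p: "p permutes {..<k}" by simp
    have "sign (inv p) = sign p" by (rule sign_inverse[OF permutes_imp_permutation[OF _ p]]) simp
    moreover have "(\<Prod>i<k. X (inv p i) i) = (\<Prod>i<k. X i (p i))"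
      using perm_prod_reindex[OF p, of "\<lambda>j. X (inv p j) j"] permutes_inverses(2)[OF p] by simp
    ultimately show "of_int (sign (inv p)) * (\<Prod>i<k. X (inv p i) i) = of_int (sign p) * (\<Prod>i<k. X i (p i))"
      by simp
  qed
  finally show ?thesis by simp
qed

lemma cmp_adj: "cmp (adjoint_mat A) S T = cnj (cmp A T S)"
proof (cases "card S = card T")
  case False
  then show ?thesis unfolding cmp_def by auto
next
  case True
  define k where "k = card T"
  define s where "s = (!) (sorted_list_of_set S)"
  define t where "t = (!) (sorted_list_of_set T)"
  have "cmp (adjoint_mat A) S T = (\<Sum>p\<in>{p. p permutes {..<k}}. of_int (sign p) * (\<Prod>i<k. cnj (A $ t i $ s (p i))))"
    unfolding cmp_def gdet_def using True
    by (simp add: k_def s_def t_def adjoint_mat_def)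
  also have "\<dots> = (\<Sum>p\<in>{p. p permutes {..<k}}. of_int (sign p) * (\<Prod>i<k. cnj (A $ t (p i) $ s i)))"
    by (rule perm_transpose)
  also have "\<dots> = cnj (cmp A T S)"
    unfolding cmp_def gdet_def using True
    by (simp add: k_def s_def t_def cnj_sum cnj_prod)
  finally show ?thesis .
qed


lemma norm_sq: "(norm (v :: (complex, 'm::finite) vec))^2 = (\<Sum>i\<in>UNIV. (cmod (v $ i))^2)"
  by (simp add: norm_vec_def L2_set_def sum_nonneg)

lemma norm_sq_c: "complex_of_real ((norm (v :: (complex, 'm::finite) vec))^2) = (\<Sum>i\<in>UNIV. v $ i * cnj (v $ i))"
  unfolding norm_sq of_real_sum by (rule sum.cong[OF refl]) (rule complex_norm_square)

lemma mat1_diag: "(mat 1 :: ((complex, 'n::finite) vec, 'n) vec) = diag_mat (\<lambda>_. 1)"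
  by (simp add: vec_eq_iff mat_def diag_mat_def)

lemma wedge_unitary_isom:
  fixes L :: "((complex, 'n::{finite,linorder}) vec, 'n) vec"
  assumes "unitary_mat L"
  shows "norm (wedge_map L y) = norm y"
proof -
  have orth: "(\<Sum>S\<in>UNIV. cnj (cmp L S T') * cmp L S T) = (if T' = T then 1 else 0)" for T T'
  proof -
    have "adjoint_mat L ** L = diag_mat (\<lambda>_. 1)"
      using assms unfolding unitary_mat_def by (simp add: mat1_diag)
    have e: "cmp (adjoint_mat L ** L) T' T = (\<Sum>S\<in>UNIV. cnj (cmp L S T') * cmp L S T)"
      by (simp add: cmp_mult cmp_adj)
    have "(\<Sum>S\<in>UNIV. cnj (cmp L S T') * cmp L S T) = cmp (diag_mat (\<lambda>_. 1)) T' T"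
      using e \<open>adjoint_mat L ** L = diag_mat (\<lambda>_. 1)\<close> by simp
    also have "\<dots> = (if T' = T then 1 else 0)" by (simp add: cmp_diag)
    finally show ?thesis .
  qed
  define z where "z = wedge_map L y"
  have "complex_of_real ((norm z)^2) = (\<Sum>S\<in>UNIV. z $ S * cnj (z $ S))" by (rule norm_sq_c)
  also have "\<dots> = (\<Sum>S\<in>UNIV. \<Sum>T\<in>UNIV. \<Sum>T'\<in>UNIV. (y $ T * cnj (y $ T')) * (cnj (cmp L S T') * cmp L S T))"
    by (simp add: z_def wedge_map_nth cnj_sum sum_product mult_ac)
  also have "\<dots> = (\<Sum>T\<in>UNIV. \<Sum>S\<in>UNIV. \<Sum>T'\<in>UNIV. (y $ T * cnj (y $ T')) * (cnj (cmp L S T') * cmp L S T))"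
    by (rule sum.swap)
  also have "\<dots> = (\<Sum>T\<in>UNIV. \<Sum>T'\<in>UNIV. \<Sum>S\<in>UNIV. (y $ T * cnj (y $ T')) * (cnj (cmp L S T') * cmp L S T))"
    by (rule sum.cong[OF refl], rule sum.swap)
  also have "\<dots> = (\<Sum>T\<in>UNIV. \<Sum>T'\<in>UNIV. (y $ T * cnj (y $ T')) * (if T' = T then 1 else 0))"
    by (simp add: orth flip: sum_distrib_left)
  also have "\<dots> = (\<Sum>T\<in>UNIV. y $ T * cnj (y $ T))"
    by (rule sum.cong[OF refl]) (simp add: if_distrib[of "\<lambda>x. _ * x"] cong: if_cong)
  also have "\<dots> = complex_of_real ((norm y)^2)" by (rule norm_sq_c[symmetric])
  finally have "(norm z)^2 = (norm y)^2" by (simp only: of_real_eq_iff)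
  then show ?thesis unfolding z_def by (simp add: power2_eq_iff_nonneg)
qed


lemma diag_diff_bound:
  fixes \<sigma> \<tau> :: "'n::{finite,linorder} \<Rightarrow> real"
  assumes s: "\<And>j. 0 \<le> \<sigma> j \<and> \<sigma> j \<le> 1" and t: "\<And>j. 0 \<le> \<tau> j \<and> \<tau> j \<le> 1"
  shows "norm (wedge_map (diag_mat \<sigma>) y - wedge_map (diag_mat \<tau>) y)
     \<le> (\<Sum>j\<in>UNIV. \<bar>\<sigma> j - \<tau> j\<bar>) * norm y"
proof -
  define E where "E = (\<Sum>j\<in>UNIV. \<bar>\<sigma> j - \<tau> j\<bar>)"
  have E0: "0 \<le> E" unfolding E_def by (simp add: sum_nonneg)
  define w where "w = wedge_map (diag_mat \<sigma>) y - wedge_map (diag_mat \<tau>) y"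
  have comp: "w $ S = complex_of_real ((\<Prod>x\<in>S. \<sigma> x) - (\<Prod>x\<in>S. \<tau> x)) * y $ S" for S
  proof -
    have "w $ S = (\<Sum>T\<in>UNIV. (if S = T then complex_of_real ((\<Prod>x\<in>S. \<sigma> x) - (\<Prod>x\<in>S. \<tau> x)) * y $ T else 0))"
      unfolding w_def by (simp add: wedge_map_nth cmp_diag sum_subtractf[symmetric] left_diff_distrib
          if_distrib[of "\<lambda>x. x * _"] cong: if_cong)
    also have "\<dots> = complex_of_real ((\<Prod>x\<in>S. \<sigma> x) - (\<Prod>x\<in>S. \<tau> x)) * y $ S"
      by simp
    finally show ?thesis .
  qed
  have bnd: "\<bar>(\<Prod>x\<in>S. \<sigma> x) - (\<Prod>x\<in>S. \<tau> x)\<bar> \<le> E" for S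
  proof -
    have "\<bar>(\<Prod>x\<in>S. \<sigma> x) - (\<Prod>x\<in>S. \<tau> x)\<bar> \<le> (\<Sum>x\<in>S. \<bar>\<sigma> x - \<tau> x\<bar>)"
      using norm_prod_diff[of S \<sigma> \<tau>] s t by (simp add: abs_le_iff)
    also have "\<dots> \<le> E" unfolding E_def by (rule sum_mono2) auto
    finally show ?thesis .
  qed
  have "norm w = L2_set (\<lambda>S. cmod (w $ S)) UNIV" by (simp add: norm_vec_def)
  also have "\<dots> \<le> L2_set (\<lambda>S. E * cmod (y $ S)) UNIV"
  proof (rule L2_set_mono)
    fix S
    have "cmod (w $ S) = \<bar>(\<Prod>x\<in>S. \<sigma> x) - (\<Prod>x\<in>S. \<tau> x)\<bar> * cmod (y $ S)"
      by (simp only: comp norm_mult norm_of_real)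
    also have "\<dots> \<le> E * cmod (y $ S)" by (rule mult_right_mono[OF bnd]) simp
    finally show "cmod (w $ S) \<le> E * cmod (y $ S)" .
  qed simp
  also have "\<dots> = E * norm y" by (simp add: norm_vec_def L2_set_right_distrib[OF E0])
  finally show ?thesis unfolding w_def E_def .
qed

lemma mult_diag_nth: "(L ** diag_mat d) $ i $ k = L $ i $ k * complex_of_real (d k)"
  by (simp add: matrix_matrix_mult_def diag_mat_def if_distrib[of "\<lambda>x. _ * x"] cong: if_cong)

theorem mainTheorem1:
  fixes u L R :: "((complex, 'n::{finite,linorder}) vec, 'n) vec"
    and \<sigma> \<epsilon> :: "'n \<Rightarrow> real"
  assumes "unitary_mat L" and "unitary_mat R"
    and "u = L ** diag_mat \<sigma> ** R"
    and "\<And>j. 0 \<le> \<sigma> j \<and> \<sigma> j \<le> 1"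
    and "\<And>i j. i \<le> j \<Longrightarrow> \<sigma> j \<le> \<sigma> i"
    and "\<And>j. 0 \<le> \<sigma> j + \<epsilon> j \<and> \<sigma> j + \<epsilon> j \<le> 1"
  shows "onorm (\<lambda>x. wedge_map u x - wedge_map
           (\<chi> i j. \<Sum>k\<in>UNIV. complex_of_real (\<sigma> k + \<epsilon> k) * L $ i $ k * R $ k $ j) x)
         \<le> (\<Sum>j\<in>UNIV. \<bar>\<epsilon> j\<bar>)"
proof (rule onorm_le)
  fix x :: "(complex, 'n set) vec"
  define \<tau> where "\<tau> j = \<sigma> j + \<epsilon> j" for j
  have ut: "(\<chi> i j. \<Sum>k\<in>UNIV. complex_of_real (\<sigma> k + \<epsilon> k) * L $ i $ k * R $ k $ j) = L ** diag_mat \<tau> ** R"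
    by (simp add: vec_eq_iff matrix_matrix_mult_def[of "L ** diag_mat \<tau>" R] mult_diag_nth \<tau>_def mult_ac)
  define y where "y = wedge_map R x"
  have "wedge_map u x - wedge_map (\<chi> i j. \<Sum>k\<in>UNIV. complex_of_real (\<sigma> k + \<epsilon> k) * L $ i $ k * R $ k $ j) x
     = wedge_map L (wedge_map (diag_mat \<sigma>) y - wedge_map (diag_mat \<tau>) y)"
    unfolding ut assms(3) y_def by (simp add: wedge_map_mult wedge_map_diff)
  hence "norm (wedge_map u x - wedge_map (\<chi> i j. \<Sum>k\<in>UNIV. complex_of_real (\<sigma> k + \<epsilon> k) * L $ i $ k * R $ k $ j) x)
     = norm (wedge_map (diag_mat \<sigma>) y - wedge_map (diag_mat \<tau>) y)"
    by (simp add: wedge_unitary_isom[OF assms(1)])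
  also have "\<dots> \<le> (\<Sum>j\<in>UNIV. \<bar>\<sigma> j - \<tau> j\<bar>) * norm y"
    by (rule diag_diff_bound) (use assms(4,6) in \<open>auto simp: \<tau>_def\<close>)
  also have "\<dots> = (\<Sum>j\<in>UNIV. \<bar>\<epsilon> j\<bar>) * norm x"
    by (simp add: \<tau>_def y_def wedge_unitary_isom[OF assms(2)])
  finally show "norm (wedge_map u x - wedge_map (\<chi> i j. \<Sum>k\<in>UNIV. complex_of_real (\<sigma> k + \<epsilon> k) * L $ i $ k * R $ k $ j) x)
     \<le> (\<Sum>j\<in>UNIV. \<bar>\<epsilon> j\<bar>) * norm x" .
qed

end
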